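(* Let $G$ be a finite connected $k$-regular simple graph on $n\ge 2$ vertices. Then $$h(G) < k\,\lambda(G)\sqrt{\frac{n}{\lfloor n/2\rfloor}}.$$
   Context: For a finite simple connected graph $G=(V,E)$ on $n$ vertices, the expansion constant is $h(G)=\min\{|\partial F|/|F| : F\subset V,\ 0<|F|\le n/2\}$, where $\partial F$ is the set of edges joining a vertex of $F$ to a vertex of $V\setminus F$. An $L(2,1)$-colouring of $G$ is a map $f:V\to\mathbb{Z}_{\ge 0}$ with $|f(u)-f(v)|\ge 2$ whenever $u,v$ are adjacent and $|f(u)-f(v)|\ge 1$ whenever $u,v$ are at distance two. Its span is $\max f-\min f$, and $\lambda(G)$ denotes the minimum span over all $L(2,1)$-colourings of $G$. *)

theory Defs
  imports "HOL-Analysis.Analysis"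
begin

definition simple_graph :: "'a set \<Rightarrow> ('a \<Rightarrow> 'a \<Rightarrow> bool) \<Rightarrow> bool" where
  "simple_graph V E \<longleftrightarrow> finite V \<and> (\<forall>u v. E u v \<longrightarrow> u \<in> V \<and> v \<in> V)
     \<and> (\<forall>u v. E u v \<longrightarrow> E v u) \<and> (\<forall>v. \<not> E v v)"

definition connected_graph :: "'a set \<Rightarrow> ('a \<Rightarrow> 'a \<Rightarrow> bool) \<Rightarrow> bool" where
  "connected_graph V E \<longleftrightarrow> (\<forall>u\<in>V. \<forall>v\<in>V. E\<^sup>*\<^sup>* u v)"

definition neighbours :: "'a set \<Rightarrow> ('a \<Rightarrow> 'a \<Rightarrow> bool) \<Rightarrow> 'a \<Rightarrow> 'a set" where
  "neighbours V E v = {u \<in> V. E v u}"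

definition regular :: "'a set \<Rightarrow> ('a \<Rightarrow> 'a \<Rightarrow> bool) \<Rightarrow> nat \<Rightarrow> bool" where
  "regular V E k \<longleftrightarrow> (\<forall>v\<in>V. card (neighbours V E v) = k)"

definition edge_boundary :: "'a set \<Rightarrow> ('a \<Rightarrow> 'a \<Rightarrow> bool) \<Rightarrow> 'a set \<Rightarrow> 'a set set" where
  "edge_boundary V E F = {{u, v} | u v. u \<in> F \<and> v \<in> V - F \<and> E u v}"

definition expansion_constant :: "'a set \<Rightarrow> ('a \<Rightarrow> 'a \<Rightarrow> bool) \<Rightarrow> real" where
  "expansion_constant V E =
     Min {real (card (edge_boundary V E F)) / real (card F) | F.
            F \<subseteq> V \<and> 0 < card F \<and> real (card F) \<le> real (card V) / 2}"

definition dist_two :: "('a \<Rightarrow> 'a \<Rightarrow> bool) \<Rightarrow> 'a \<Rightarrow> 'a \<Rightarrow> bool" where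
  "dist_two E u v \<longleftrightarrow> u \<noteq> v \<and> \<not> E u v \<and> (\<exists>w. E u w \<and> E w v)"

definition L21_colouring :: "'a set \<Rightarrow> ('a \<Rightarrow> 'a \<Rightarrow> bool) \<Rightarrow> ('a \<Rightarrow> nat) \<Rightarrow> bool" where
  "L21_colouring V E f \<longleftrightarrow>
     (\<forall>u\<in>V. \<forall>v\<in>V. E u v \<longrightarrow> \<bar>int (f u) - int (f v)\<bar> \<ge> 2) \<and>
     (\<forall>u\<in>V. \<forall>v\<in>V. dist_two E u v \<longrightarrow> \<bar>int (f u) - int (f v)\<bar> \<ge> 1)"

definition span :: "'a set \<Rightarrow> ('a \<Rightarrow> nat) \<Rightarrow> nat" where
  "span V f = Max (f ` V) - Min (f ` V)"

definition lambda21 :: "'a set \<Rightarrow> ('a \<Rightarrow> 'a \<Rightarrow> bool) \<Rightarrow> nat" where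
  "lambda21 V E = (LEAST s. \<exists>f. L21_colouring V E f \<and> span V f = s)"

end

theory Submission
  imports Defs
begin

theorem theorem2p2:
  fixes V :: "'a set" and E :: "'a \<Rightarrow> 'a \<Rightarrow> bool" and k :: nat
  assumes "simple_graph V E"
    and "connected_graph V E"
    and "regular V E k"
    and "card V \<ge> 2"
  shows "expansion_constant V E
           < real k * real (lambda21 V E) * sqrt (real (card V) / real (card V div 2))"
proof -
  have fin: "finite V" and inV: "\<And>u v. E u v \<Longrightarrow> u \<in> V \<and> v \<in> V"
    and sym: "\<And>u v. E u v \<Longrightarrow> E v u" and irr: "\<And>v. \<not> E v v"
    using assms(1) unfolding simple_graph_def by auto
  obtain a b where ab: "a \<in> V" "b \<in> V" "a \<noteq> b"
  proof -
    obtain a where "a \<in> V" using assms(4) by (metis card.empty ex_in_conv not_numeral_le_zero)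
    moreover have "card (V - {a}) \<ge> 1" using assms(4) \<open>a \<in> V\<close> fin by (simp add: card_Diff_singleton)
    hence "V - {a} \<noteq> {}" by (metis card.empty not_one_le_zero)
    ultimately show ?thesis using that by blast
  qed
  have "E\<^sup>*\<^sup>* a b" using assms(2) ab unfolding connected_graph_def by auto
  then obtain u w where uw: "E u w"
    using ab(3) by (metis converse_rtranclpE)
  have uV: "u \<in> V" and wV: "w \<in> V" using inV uw by auto
  have "w \<in> neighbours V E u" using uw wV unfolding neighbours_def by auto
  moreover have "finite (neighbours V E u)" using fin unfolding neighbours_def by auto
  ultimately have "card (neighbours V E u) > 0" by (metis card_gt_0_iff empty_iff)
  hence kpos: "k > 0" using assms(3) uV unfolding regular_def by auto
  \<comment> \<open>expansion constant at most k\<close>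
  define S where "S = {real (card (edge_boundary V E F)) / real (card F) | F.
            F \<subseteq> V \<and> 0 < card F \<and> real (card F) \<le> real (card V) / 2}"
  have finS: "finite S"
  proof -
    have "S = (\<lambda>F. real (card (edge_boundary V E F)) / real (card F)) `
       {F. F \<subseteq> V \<and> 0 < card F \<and> real (card F) \<le> real (card V) / 2}"
      unfolding S_def by auto
    moreover have "finite {F. F \<subseteq> V \<and> 0 < card F \<and> real (card F) \<le> real (card V) / 2}"
      using fin by (rule rev_finite_subset[OF finite_Pow_iff[THEN iffD2]]) auto
    ultimately show ?thesis by simp
  qed
  have eb: "edge_boundary V E {u} = (\<lambda>x. {u, x}) ` neighbours V E u"
    unfolding edge_boundary_def neighbours_def using irr by auto
  have "card (edge_boundary V E {u}) \<le> card (neighbours V E u)"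
    unfolding eb by (rule card_image_le) (use fin in \<open>auto simp: neighbours_def\<close>)
  hence cb: "card (edge_boundary V E {u}) \<le> k" using assms(3) uV unfolding regular_def by auto
  have "real (card (edge_boundary V E {u})) / real (card {u}) \<in> S"
    unfolding S_def using uV assms(4) by (intro CollectI exI[of _ "{u}"]) auto
  hence "expansion_constant V E \<le> real (card (edge_boundary V E {u}))"
    unfolding expansion_constant_def S_def[symmetric] using Min_le[OF finS] by auto
  hence hk: "expansion_constant V E \<le> real k" using cb by linarith
  \<comment> \<open>lambda at least 2\<close>
  obtain g where g: "bij_betw g V {0..<card V}" using ex_bij_betw_finite_nat[OF fin] by blast
  have "L21_colouring V E (\<lambda>x. 2 * g x)"
  proof -
    have "\<And>x y. x \<in> V \<Longrightarrow> y \<in> V \<Longrightarrow> x \<noteq> y \<Longrightarrow> g x \<noteq> g y"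
      using g unfolding bij_betw_def inj_on_def by auto
    thus ?thesis unfolding L21_colouring_def dist_two_def using irr by fastforce
  qed
  hence ex: "\<exists>s f. L21_colouring V E f \<and> span V f = s" by blast
  obtain f where f: "L21_colouring V E f" "span V f = lambda21 V E"
    using LeastI_ex[OF ex] unfolding lambda21_def by blast
  have "\<bar>int (f u) - int (f w)\<bar> \<ge> 2" using f(1) uw uV wV unfolding L21_colouring_def by auto
  moreover have "f u \<le> Max (f ` V)" "f w \<le> Max (f ` V)" "Min (f ` V) \<le> f u" "Min (f ` V) \<le> f w"
    using fin uV wV by auto
  ultimately have lam: "lambda21 V E \<ge> 2" using f(2) unfolding span_def by linarith
  have "card V div 2 > 0" using assms(4) by simp
  moreover have "card V div 2 \<le> card V" by simp
  ultimately have "real (card V) / real (card V div 2) \<ge> 1" by simp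
  hence sq: "sqrt (real (card V) / real (card V div 2)) \<ge> 1" by simp
  have "real k * 2 \<le> real k * real (lambda21 V E)" using lam by (intro mult_left_mono) auto
  also have "\<dots> \<le> real k * real (lambda21 V E) * sqrt (real (card V) / real (card V div 2))"
    using sq by (intro mult_le_cancel_left1[THEN iffD2]) (metis not_less mult_nonneg_nonneg of_nat_0_le_iff)
  finally have "real k * 2 \<le> real k * real (lambda21 V E) * sqrt (real (card V) / real (card V div 2))" .
  moreover have "real k < real k * 2" using kpos by simp
  ultimately show ?thesis using hk by linarith
qed

end
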